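(* Let $R>0$, $s(z):=R^2-|z_1|^2-\dots-|z_n|^2$, $d\in\mathbb N^*$ and $y\in\mathcal H_d$. If $M_d(y)\succeq0$ and $M_{d-1}(sy)=0$, then $\operatorname{Tr}(M_d(y))\le y_{0,0}\sum_{l=0}^dR^{2l}$.
   Context: For $\alpha\in\mathbb N^n$, $|\alpha|=\sum\alpha_i$. $\mathcal H_d$ is the set of complex families $y=(y_{\alpha,\beta})_{|\alpha|,|\beta|\le d}$ with $\overline{y_{\alpha,\beta}}=y_{\beta,\alpha}$. For a real-valued complex polynomial $\varphi(z)=\sum_{|\gamma|,|\delta|\le l}\varphi_{\gamma,\delta}\bar z^\gamma z^\delta$ ($\overline{\varphi_{\gamma,\delta}}=\varphi_{\delta,\gamma}$) and an integer $e$ with $e+l\le d$, $M_e(\varphi y)$ is the Hermitian matrix indexed by $|\alpha|,|\beta|\le e$ with entries $\sum_{|\gamma|,|\delta|\le l}\varphi_{\gamma,\delta}y_{\alpha+\gamma,\beta+\delta}$; $M_d(y):=M_d(1\cdot y)$, i.e. entries $y_{\alpha,\beta}$. *)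

theory Defs
  imports Main "HOL-Library.Complex_Order"
begin

text \<open>Multi-indices alpha in N^n are functions 'n => nat for a finite index type 'n
  (so n = CARD('n)). |alpha| = sum of the entries.\<close>

definition mdeg :: "('n::finite \<Rightarrow> nat) \<Rightarrow> nat" where
  "mdeg \<alpha> = (\<Sum>i\<in>UNIV. \<alpha> i)"

definition midx :: "nat \<Rightarrow> ('n::finite \<Rightarrow> nat) set" where
  "midx d = {\<alpha>. mdeg \<alpha> \<le> d}"

definition madd :: "('n \<Rightarrow> nat) \<Rightarrow> ('n \<Rightarrow> nat) \<Rightarrow> ('n \<Rightarrow> nat)" where
  "madd \<alpha> \<gamma> = (\<lambda>i. \<alpha> i + \<gamma> i)"

definition munit :: "'n \<Rightarrow> ('n \<Rightarrow> nat)" where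
  "munit i = (\<lambda>j. if j = i then 1 else 0)"

definition in_H :: "nat \<Rightarrow> (('n::finite \<Rightarrow> nat) \<Rightarrow> ('n \<Rightarrow> nat) \<Rightarrow> complex) \<Rightarrow> bool" where
  "in_H d y \<longleftrightarrow> (\<forall>\<alpha>\<in>midx d. \<forall>\<beta>\<in>midx d. cnj (y \<alpha> \<beta>) = y \<beta> \<alpha>)"

definition loc_mat ::
  "nat \<Rightarrow> (('n::finite \<Rightarrow> nat) \<Rightarrow> ('n \<Rightarrow> nat) \<Rightarrow> complex) \<Rightarrow> nat
     \<Rightarrow> (('n \<Rightarrow> nat) \<Rightarrow> ('n \<Rightarrow> nat) \<Rightarrow> complex) \<Rightarrow> ('n \<Rightarrow> nat) \<Rightarrow> ('n \<Rightarrow> nat) \<Rightarrow> complex" where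
  "loc_mat l \<phi> e y \<alpha> \<beta> =
     (\<Sum>\<gamma>\<in>midx l. \<Sum>\<delta>\<in>midx l. \<phi> \<gamma> \<delta> * y (madd \<alpha> \<gamma>) (madd \<beta> \<delta>))"

definition mom_mat :: "nat \<Rightarrow> (('n::finite \<Rightarrow> nat) \<Rightarrow> ('n \<Rightarrow> nat) \<Rightarrow> complex)
     \<Rightarrow> ('n \<Rightarrow> nat) \<Rightarrow> ('n \<Rightarrow> nat) \<Rightarrow> complex" where
  "mom_mat d y \<alpha> \<beta> = y \<alpha> \<beta>"

text \<open>Positive semidefinite matrix on index set I: v^* M v >= 0 (as complex numbers,
  i.e. real and nonnegative) for all complex vectors v.\<close>
definition psd_on :: "'a set \<Rightarrow> ('a \<Rightarrow> 'a \<Rightarrow> complex) \<Rightarrow> bool" where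
  "psd_on I M \<longleftrightarrow> (\<forall>v::'a \<Rightarrow> complex. 0 \<le> (\<Sum>\<alpha>\<in>I. \<Sum>\<beta>\<in>I. cnj (v \<alpha>) * M \<alpha> \<beta> * v \<beta>))"

definition zero_on :: "'a set \<Rightarrow> ('a \<Rightarrow> 'a \<Rightarrow> complex) \<Rightarrow> bool" where
  "zero_on I M \<longleftrightarrow> (\<forall>\<alpha>\<in>I. \<forall>\<beta>\<in>I. M \<alpha> \<beta> = 0)"

definition mtrace :: "'a set \<Rightarrow> ('a \<Rightarrow> 'a \<Rightarrow> complex) \<Rightarrow> complex" where
  "mtrace I M = (\<Sum>\<alpha>\<in>I. M \<alpha> \<alpha>)"

text \<open>Coefficients of s(z) = R^2 - |z_1|^2 - ... - |z_n|^2 = R^2 zbar^0 z^0 - sum_i zbar^{e_i} z^{e_i}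
  (degree l = 1).\<close>
definition s_coeff :: "real \<Rightarrow> ('n::finite \<Rightarrow> nat) \<Rightarrow> ('n \<Rightarrow> nat) \<Rightarrow> complex" where
  "s_coeff R \<gamma> \<delta> =
     (if \<gamma> = (\<lambda>_. 0) \<and> \<delta> = (\<lambda>_. 0) then complex_of_real (R\<^sup>2)
      else if \<gamma> = \<delta> \<and> (\<exists>i. \<gamma> = munit i) then -1 else 0)"

end

theory Submission
  imports Defs "HOL-Library.FuncSet"
begin

lemma finite_midx: "finite (midx k :: ('n::finite \<Rightarrow> nat) set)"
proof -
  have "midx k \<subseteq> Pi UNIV (\<lambda>_::'n. {..k})"
  proof
    fix \<alpha> :: "'n \<Rightarrow> nat" assume "\<alpha> \<in> midx k"
    hence "mdeg \<alpha> \<le> k" by (simp add: midx_def)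
    moreover have "\<And>i. \<alpha> i \<le> mdeg \<alpha>" unfolding mdeg_def
      by (rule member_le_sum) auto
    ultimately show "\<alpha> \<in> Pi UNIV (\<lambda>_. {..k})" by (auto intro: le_trans)
  qed
  moreover have "finite (Pi UNIV (\<lambda>_::'n. {..k}))"
    by (metis PiE_UNIV_domain finite_PiE finite_UNIV finite_atMost)
  ultimately show ?thesis by (rule finite_subset)
qed

lemma mdeg_madd: "mdeg (madd \<alpha> \<beta>) = mdeg \<alpha> + mdeg (\<beta>::'n::finite\<Rightarrow>nat)"
  by (simp add: mdeg_def madd_def sum.distrib)

lemma mdeg_munit: "mdeg (munit i :: 'n::finite \<Rightarrow> nat) = 1"
  by (simp add: mdeg_def munit_def)

lemma mdeg_zero: "mdeg (\<lambda>_::'n::finite. 0::nat) = 0"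
  by (simp add: mdeg_def)

lemma madd_zero: "madd \<alpha> (\<lambda>_. 0) = \<alpha>"
  by (simp add: madd_def)

lemma inj_munit: "inj munit"
  by (rule injI) (metis munit_def one_neq_zero)

lemma munit_nz: "munit i \<noteq> (\<lambda>_. 0)"
  by (metis munit_def one_neq_zero)

lemma munit_nz': "(\<lambda>_. 0::nat) \<noteq> munit i"
  using munit_nz by metis

lemma loc_eq:
  fixes y :: "('n::finite \<Rightarrow> nat) \<Rightarrow> ('n \<Rightarrow> nat) \<Rightarrow> complex"
  shows "loc_mat 1 (s_coeff R) e y \<alpha> \<beta> = complex_of_real (R\<^sup>2) * y \<alpha> \<beta>
      - (\<Sum>i\<in>UNIV. y (madd \<alpha> (munit i)) (madd \<beta> (munit i)))"
proof -
  define f where "f \<gamma> \<delta> = y (madd \<alpha> \<gamma>) (madd \<beta> \<delta>)" for \<gamma> \<delta>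
  have fin: "finite (midx 1 :: ('n \<Rightarrow> nat) set)" by (rule finite_midx)
  have inner: "(\<Sum>\<delta>\<in>midx 1. s_coeff R \<gamma> \<delta> * f \<gamma> \<delta>) = s_coeff R \<gamma> \<gamma> * f \<gamma> \<gamma>"
    if "\<gamma> \<in> midx 1" for \<gamma>
  proof -
    have "(\<Sum>\<delta>\<in>midx 1. s_coeff R \<gamma> \<delta> * f \<gamma> \<delta>)
        = (\<Sum>\<delta>\<in>midx 1. if \<delta> = \<gamma> then s_coeff R \<gamma> \<gamma> * f \<gamma> \<gamma> else 0)"
      by (rule sum.cong) (auto simp: s_coeff_def)
    also have "\<dots> = s_coeff R \<gamma> \<gamma> * f \<gamma> \<gamma>" using fin that by simp
    finally show ?thesis .
  qed
  have split: "s_coeff R \<gamma> \<gamma> * f \<gamma> \<gamma> =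
     (if \<gamma> = (\<lambda>_. 0) then complex_of_real (R\<^sup>2) * f \<gamma> \<gamma> else 0)
     - (if \<gamma> \<in> range munit then f \<gamma> \<gamma> else 0)" for \<gamma>
    apply (cases "\<gamma> = (\<lambda>_. 0)")
     apply (auto simp: s_coeff_def)
    apply (simp add: fun_eq_iff munit_def)
    apply (metis zero_neq_one)
    done
  have z1: "(\<lambda>_. 0) \<in> (midx 1 :: ('n \<Rightarrow> nat) set)" by (simp add: midx_def mdeg_zero)
  have r1: "midx 1 \<inter> range munit = (range munit :: ('n \<Rightarrow> nat) set)"
    by (auto simp: midx_def mdeg_munit)
  have "loc_mat 1 (s_coeff R) e y \<alpha> \<beta> = (\<Sum>\<gamma>\<in>midx 1. s_coeff R \<gamma> \<gamma> * f \<gamma> \<gamma>)"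
    unfolding loc_mat_def f_def[symmetric] by (rule sum.cong[OF refl], rule inner)
  also have "\<dots> = (\<Sum>\<gamma>\<in>midx 1. if \<gamma> = (\<lambda>_. 0) then complex_of_real (R\<^sup>2) * f \<gamma> \<gamma> else 0)
     - (\<Sum>\<gamma>\<in>midx 1. if \<gamma> \<in> range munit then f \<gamma> \<gamma> else 0)"
    unfolding split by (rule sum_subtractf)
  also have "\<dots> = complex_of_real (R\<^sup>2) * f (\<lambda>_. 0) (\<lambda>_. 0) - (\<Sum>\<gamma>\<in>range munit. f \<gamma> \<gamma>)"
    using fin z1 sum.inter_restrict[OF fin, of "\<lambda>\<gamma>. f \<gamma> \<gamma>" "range munit"]
    unfolding r1 by simp
  also have "(\<Sum>\<gamma>\<in>range munit. f \<gamma> \<gamma>) = (\<Sum>i\<in>UNIV. f (munit i) (munit i))"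
    by (simp add: sum.reindex[OF inj_munit])
  finally show ?thesis by (simp add: f_def madd_zero)
qed

theorem mainTheorem8:
  fixes R :: real and d :: nat
    and y :: "('n::finite \<Rightarrow> nat) \<Rightarrow> ('n \<Rightarrow> nat) \<Rightarrow> complex"
  assumes "R > 0" and "d \<ge> 1" and "in_H d y"
    and "psd_on (midx d) (mom_mat d y)"
    and "zero_on (midx (d - 1)) (loc_mat 1 (s_coeff R) (d - 1) y)"
  shows "mtrace (midx d) (mom_mat d y)
           \<le> y (\<lambda>_. 0) (\<lambda>_. 0) * complex_of_real (\<Sum>l=0..d. R ^ (2 * l))"
proof -
  define t where "t \<alpha> = Re (y \<alpha> \<alpha>)" for \<alpha>
  define z where "z = (\<lambda>_::'n. 0::nat)"
  have P: "0 \<le> y \<alpha> \<alpha>" if "\<alpha> \<in> midx d" for \<alpha>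
  proof -
    define v where "v x = (if x = \<alpha> then 1 else 0 :: complex)" for x
    have "0 \<le> (\<Sum>a\<in>midx d. \<Sum>b\<in>midx d. cnj (v a) * mom_mat d y a b * v b)"
      using assms(4) unfolding psd_on_def by blast
    also have "\<dots> = (\<Sum>a\<in>midx d. \<Sum>b\<in>midx d. if b = \<alpha> then (if a = \<alpha> then y a b else 0) else 0)"
      by (intro sum.cong refl) (simp add: v_def mom_mat_def)
    also have "\<dots> = (\<Sum>a\<in>midx d. if a = \<alpha> then y a \<alpha> else 0)"
    proof (rule sum.cong[OF refl])
      fix a show "(\<Sum>b\<in>midx d. if b = \<alpha> then (if a = \<alpha> then y a b else 0) else 0) = (if a = \<alpha> then y a \<alpha> else 0)"
      proof (cases "a = \<alpha>")
        case True show ?thesis unfolding True if_P[OF refl] using sum.delta[OF finite_midx[of d], of \<alpha> "y \<alpha>"] that by simp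
      next
        case False show ?thesis unfolding if_not_P[OF False] by simp
      qed
    qed
    also have "\<dots> = y \<alpha> \<alpha>" using sum.delta[OF finite_midx[of d], of \<alpha> "\<lambda>a. y a \<alpha>"] that by simp
    finally show ?thesis .
  qed
  have Im0: "Im (y \<alpha> \<alpha>) = 0" and tnn: "0 \<le> t \<alpha>" if "\<alpha> \<in> midx d" for \<alpha>
    using P[OF that] by (auto simp: less_eq_complex_def t_def)
  have yt: "y \<alpha> \<alpha> = complex_of_real (t \<alpha>)" if "\<alpha> \<in> midx d" for \<alpha>
    using Im0[OF that] by (simp add: t_def complex_eq_iff)
  have mono: "midx a \<subseteq> midx b" if "a \<le> b" for a b
    using that by (auto simp: midx_def)
  have L: "R\<^sup>2 * t \<alpha> = (\<Sum>i\<in>UNIV. t (madd \<alpha> (munit i)))" if "\<alpha> \<in> midx (d-1)" for \<alpha>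
  proof -
    have "loc_mat 1 (s_coeff R) (d - 1) y \<alpha> \<alpha> = 0"
      using assms(5) that unfolding zero_on_def by blast
    hence "Re (loc_mat 1 (s_coeff R) (d - 1) y \<alpha> \<alpha>) = 0" by simp
    hence "Re (complex_of_real (R\<^sup>2) * y \<alpha> \<alpha>
      - (\<Sum>i\<in>UNIV. y (madd \<alpha> (munit i)) (madd \<alpha> (munit i)))) = 0"
      unfolding loc_eq .
    thus ?thesis by (simp add: t_def)
  qed
  define S where "S k = (\<Sum>\<alpha>\<in>midx k. t \<alpha>)" for k
  have z0: "midx 0 = {z}"
    by (auto simp: midx_def mdeg_def z_def)
  have step: "S (Suc k) \<le> t z + R\<^sup>2 * S k" if "Suc k \<le> d" for k
  proof -
    define g where "g p = madd (fst p) (munit (snd p))" for p :: "('n \<Rightarrow> nat) \<times> 'n"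
    have fk: "finite (midx k \<times> (UNIV::'n set))" by (intro finite_cartesian_product finite_midx finite_UNIV)
    have sub: "midx (Suc k) - {z} \<subseteq> g ` (midx k \<times> UNIV)"
    proof
      fix \<beta> assume b: "\<beta> \<in> midx (Suc k) - {z}"
      then obtain i where i: "\<beta> i \<noteq> 0" by (auto simp: z_def)
      define \<alpha> where "\<alpha> = \<beta>(i := \<beta> i - 1)"
      have e: "madd \<alpha> (munit i) = \<beta>" using i
        by (auto simp: madd_def munit_def \<alpha>_def)
      hence "mdeg \<beta> = mdeg \<alpha> + 1" by (metis mdeg_madd mdeg_munit)
      hence "\<alpha> \<in> midx k" using b by (simp add: midx_def)
      thus "\<beta> \<in> g ` (midx k \<times> UNIV)" using e by (force simp: g_def)
    qed
    have img: "g ` (midx k \<times> UNIV) \<subseteq> midx (Suc k)"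
      by (auto simp: g_def midx_def mdeg_madd mdeg_munit)
    have sd: "midx (Suc k) \<subseteq> midx d" using mono that by blast
    have zin: "z \<in> midx (Suc k)" by (simp add: midx_def z_def mdeg_zero)
    have "S (Suc k) = t z + (\<Sum>\<alpha>\<in>midx (Suc k) - {z}. t \<alpha>)"
      unfolding S_def by (rule sum.remove[OF finite_midx zin])
    also have "(\<Sum>\<alpha>\<in>midx (Suc k) - {z}. t \<alpha>) \<le> (\<Sum>\<alpha>\<in>g ` (midx k \<times> UNIV). t \<alpha>)"
    proof (rule sum_mono2)
      show "finite (g ` (midx k \<times> UNIV))" by (rule finite_imageI[OF fk])
      show "midx (Suc k) - {z} \<subseteq> g ` (midx k \<times> UNIV)" by (rule sub)
      fix b assume "b \<in> g ` (midx k \<times> UNIV) - (midx (Suc k) - {z})"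
      hence "b \<in> midx d" using img sd by blast
      thus "0 \<le> t b" by (rule tnn)
    qed
    also have "\<dots> \<le> (\<Sum>p\<in>midx k \<times> UNIV. t (g p))"
    proof -
      have "0 \<le> t (g p)" if "p \<in> (midx k :: ('n \<Rightarrow> nat) set) \<times> (UNIV :: 'n set)" for p
      proof -
        have "g p \<in> midx d" using that img sd by blast
        thus "0 \<le> t (g p)" by (rule tnn)
      qed
      from sum_image_le[OF fk, of t g] this show ?thesis by (simp add: o_def)
    qed
    also have "\<dots> = (\<Sum>\<alpha>\<in>midx k. \<Sum>i\<in>UNIV. t (madd \<alpha> (munit i)))"
      by (simp add: g_def sum.cartesian_product case_prod_beta)
    also have "\<dots> = (\<Sum>\<alpha>\<in>midx k. R\<^sup>2 * t \<alpha>)"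
    proof (rule sum.cong)
      fix \<alpha> :: "'n \<Rightarrow> nat" assume "\<alpha> \<in> midx k"
      hence "\<alpha> \<in> midx (d-1)" using that by (auto simp: midx_def)
      thus "(\<Sum>i\<in>UNIV. t (madd \<alpha> (munit i))) = R\<^sup>2 * t \<alpha>" using L by simp
    qed simp
    also have "\<dots> = R\<^sup>2 * S k" by (simp add: S_def sum_distrib_left)
    finally show ?thesis by simp
  qed
  have geo: "(\<Sum>l=0..Suc k. R ^ (2 * l)) = 1 + R\<^sup>2 * (\<Sum>l=0..k. R ^ (2 * l))" for k
  proof (induction k)
    case 0 show ?case by (simp add: power2_eq_square)
  next
    case (Suc k)
    have e: "R ^ (2 * Suc (Suc k)) = R\<^sup>2 * R ^ (2 * Suc k)"
      by (simp add: power2_eq_square)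
    have "(\<Sum>l=0..Suc (Suc k). R ^ (2 * l)) = (\<Sum>l=0..Suc k. R ^ (2 * l)) + R ^ (2 * Suc (Suc k))"
      by (rule sum.atLeast0_atMost_Suc)
    also have "\<dots> = 1 + R\<^sup>2 * (\<Sum>l=0..k. R ^ (2 * l)) + R\<^sup>2 * R ^ (2 * Suc k)"
      unfolding Suc.IH e ..
    also have "\<dots> = 1 + R\<^sup>2 * ((\<Sum>l=0..k. R ^ (2 * l)) + R ^ (2 * Suc k))"
      by (simp add: distrib_left)
    also have "(\<Sum>l=0..k. R ^ (2 * l)) + R ^ (2 * Suc k) = (\<Sum>l=0..Suc k. R ^ (2 * l))"
      by (rule sum.atLeast0_atMost_Suc[symmetric])
    finally show ?case .
  qed
  have ind: "k \<le> d \<Longrightarrow> S k \<le> t z * (\<Sum>l=0..k. R ^ (2 * l))" for k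
  proof (induction k)
    case 0 thus ?case by (simp add: S_def z0)
  next
    case (Suc k)
    hence "S (Suc k) \<le> t z + R\<^sup>2 * S k" using step by simp
    also have "\<dots> \<le> t z + R\<^sup>2 * (t z * (\<Sum>l=0..k. R ^ (2 * l)))"
      using Suc by (simp add: mult_left_mono)
    also have "\<dots> = t z * (\<Sum>l=0..Suc k. R ^ (2 * l))"
      unfolding geo by (simp add: algebra_simps)
    finally show ?case .
  qed
  have zd: "z \<in> midx d" by (simp add: midx_def z_def mdeg_zero)
  have "mtrace (midx d) (mom_mat d y) = complex_of_real (S d)"
    unfolding mtrace_def mom_mat_def S_def of_real_sum
    by (rule sum.cong) (auto simp: yt)
  moreover have "y (\<lambda>_. 0) (\<lambda>_. 0) = complex_of_real (t z)"
    using yt[OF zd] by (simp add: z_def)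
  ultimately show ?thesis using ind[of d]
    by (simp add: less_eq_complex_def)
qed

end
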